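(* Let $\varphi : X\to X$ be a morphism in $\mathscr{C}$ with kernel $\kappa : K\to X$ and cokernel $\lambda : X\to L$. Then $\varphi$ has a dual core inverse if and only if $\varphi$ is regular and both $\kappa\lambda : K\to L$ and $\lambda^{*}\lambda : L\to L$ are invertible. In this case, for every $\psi : X\to X$ with $\varphi\psi\varphi=\varphi$, $$\varphi_{\mathrm{core}}=[1_X-\lambda(\lambda^{*}\lambda)^{-1}\lambda^{*}]\,\psi\,[1_X-\lambda(\kappa\lambda)^{-1}\kappa].$$
   Context: $\mathscr{C}$ is an additive category with an involution $*$: a map on morphisms sending $\varphi : X\to Y$ to $\varphi^* : Y \to X$ such that $(\varphi^* )^*=\varphi$, $(\varphi\psi)^*=\psi^*\varphi^*$ and $(\varphi+\phi)^*=\varphi^*+\phi^*$. Composition is written left to right: for $\varphi : X\to Y$ and $\psi : Y\to Z$, $\varphi\psi : X \to Z$ means "first $\varphi$, then $\psi$". A kernel of $\varphi : X\to Y$ is a morphism $\kappa : K\to X$ with $\kappa\varphi=0$ such that every $\alpha : M\to X$ with $\alpha\varphi=0$ factors uniquely as $\alpha=\alpha'\kappa$. A cokernel of $\varphi$ is a morphism $\lambda : Y\to L$ with $\varphi\lambda=0$ such that every $\beta : Y\to M$ with $\varphi\beta=0$ factors uniquely as $\beta=\lambda\beta'$. $\varphi$ is regular if there is $\chi$ with $\varphi\chi\varphi=\varphi$. A morphism is invertible if it has a two-sided inverse. For $\varphi : X\to X$, a dual core inverse of $\varphi$ is a morphism $\chi : X\to X$ with $(\chi\varphi)^*=\chi\varphi$,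 $\chi^2\varphi=\chi$ and $\varphi^2\chi=\varphi$. It is unique when it exists and is denoted $\varphi_{\mathrm{core}}$. *)

theory Defs
  imports Main
begin

text \<open>Composition cmp f g is written diagrammatically: first f, then g.\<close>

record ('o, 'm) icat =
  Ob   :: "'o set"
  Hom  :: "'o \<Rightarrow> 'o \<Rightarrow> 'm set"
  cmp  :: "'m \<Rightarrow> 'm \<Rightarrow> 'm"
  idm  :: "'o \<Rightarrow> 'm"
  pls  :: "'m \<Rightarrow> 'm \<Rightarrow> 'm"
  zr   :: "'o \<Rightarrow> 'o \<Rightarrow> 'm"
  ngt  :: "'m \<Rightarrow> 'm"
  star :: "'m \<Rightarrow> 'm"

definition is_category :: "('o, 'm) icat \<Rightarrow> bool" where
  "is_category C \<longleftrightarrow>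
     (\<forall>X\<in>Ob C. idm C X \<in> Hom C X X) \<and>
     (\<forall>X\<in>Ob C. \<forall>Y\<in>Ob C. \<forall>Z\<in>Ob C. \<forall>f\<in>Hom C X Y. \<forall>g\<in>Hom C Y Z.
        cmp C f g \<in> Hom C X Z) \<and>
     (\<forall>W\<in>Ob C. \<forall>X\<in>Ob C. \<forall>Y\<in>Ob C. \<forall>Z\<in>Ob C.
        \<forall>f\<in>Hom C W X. \<forall>g\<in>Hom C X Y. \<forall>h\<in>Hom C Y Z.
        cmp C (cmp C f g) h = cmp C f (cmp C g h)) \<and>
     (\<forall>X\<in>Ob C. \<forall>Y\<in>Ob C. \<forall>f\<in>Hom C X Y.
        cmp C (idm C X) f = f \<and> cmp C f (idm C Y) = f)"

definition is_preadditive :: "('o, 'm) icat \<Rightarrow> bool" where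
  "is_preadditive C \<longleftrightarrow> is_category C \<and>
     (\<forall>X\<in>Ob C. \<forall>Y\<in>Ob C.
        zr C X Y \<in> Hom C X Y \<and>
        (\<forall>f\<in>Hom C X Y. \<forall>g\<in>Hom C X Y. pls C f g \<in> Hom C X Y) \<and>
        (\<forall>f\<in>Hom C X Y. ngt C f \<in> Hom C X Y) \<and>
        (\<forall>f\<in>Hom C X Y. \<forall>g\<in>Hom C X Y. \<forall>h\<in>Hom C X Y.
           pls C (pls C f g) h = pls C f (pls C g h)) \<and>
        (\<forall>f\<in>Hom C X Y. \<forall>g\<in>Hom C X Y. pls C f g = pls C g f) \<and>
        (\<forall>f\<in>Hom C X Y. pls C f (zr C X Y) = f) \<and>
        (\<forall>f\<in>Hom C X Y. pls C f (ngt C f) = zr C X Y)) \<and>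
     (\<forall>X\<in>Ob C. \<forall>Y\<in>Ob C. \<forall>Z\<in>Ob C.
        (\<forall>f\<in>Hom C X Y. \<forall>g\<in>Hom C Y Z. \<forall>h\<in>Hom C Y Z.
           cmp C f (pls C g h) = pls C (cmp C f g) (cmp C f h)) \<and>
        (\<forall>f\<in>Hom C X Y. \<forall>g\<in>Hom C X Y. \<forall>h\<in>Hom C Y Z.
           cmp C (pls C f g) h = pls C (cmp C f h) (cmp C g h)))"

definition is_additive :: "('o, 'm) icat \<Rightarrow> bool" where
  "is_additive C \<longleftrightarrow> is_preadditive C \<and>
     (\<exists>Z\<in>Ob C. \<forall>X\<in>Ob C. Hom C Z X = {zr C Z X} \<and> Hom C X Z = {zr C X Z}) \<and>
     (\<forall>X\<in>Ob C. \<forall>Y\<in>Ob C. \<exists>P\<in>Ob C.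
        \<exists>i1\<in>Hom C X P. \<exists>i2\<in>Hom C Y P. \<exists>p1\<in>Hom C P X. \<exists>p2\<in>Hom C P Y.
          cmp C i1 p1 = idm C X \<and> cmp C i2 p2 = idm C Y \<and>
          cmp C i1 p2 = zr C X Y \<and> cmp C i2 p1 = zr C Y X \<and>
          pls C (cmp C p1 i1) (cmp C p2 i2) = idm C P)"

definition is_involution :: "('o, 'm) icat \<Rightarrow> bool" where
  "is_involution C \<longleftrightarrow>
     (\<forall>X\<in>Ob C. \<forall>Y\<in>Ob C. \<forall>f\<in>Hom C X Y.
        star C f \<in> Hom C Y X \<and> star C (star C f) = f) \<and>
     (\<forall>X\<in>Ob C. \<forall>Y\<in>Ob C. \<forall>Z\<in>Ob C. \<forall>f\<in>Hom C X Y. \<forall>g\<in>Hom C Y Z.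
        star C (cmp C f g) = cmp C (star C g) (star C f)) \<and>
     (\<forall>X\<in>Ob C. \<forall>Y\<in>Ob C. \<forall>f\<in>Hom C X Y. \<forall>g\<in>Hom C X Y.
        star C (pls C f g) = pls C (star C f) (star C g))"

definition additive_inv_cat :: "('o, 'm) icat \<Rightarrow> bool" where
  "additive_inv_cat C \<longleftrightarrow> is_additive C \<and> is_involution C"

definition is_kernel :: "('o, 'm) icat \<Rightarrow> 'o \<Rightarrow> 'o \<Rightarrow> 'm \<Rightarrow> 'o \<Rightarrow> 'm \<Rightarrow> bool" where
  "is_kernel C X Y phi K kappa \<longleftrightarrow> K \<in> Ob C \<and> kappa \<in> Hom C K X \<and>
     cmp C kappa phi = zr C K Y \<and>
     (\<forall>M\<in>Ob C. \<forall>a\<in>Hom C M X. cmp C a phi = zr C M Y \<longrightarrow>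
        (\<exists>!a'. a' \<in> Hom C M K \<and> a = cmp C a' kappa))"

definition is_cokernel :: "('o, 'm) icat \<Rightarrow> 'o \<Rightarrow> 'o \<Rightarrow> 'm \<Rightarrow> 'o \<Rightarrow> 'm \<Rightarrow> bool" where
  "is_cokernel C X Y phi L lam \<longleftrightarrow> L \<in> Ob C \<and> lam \<in> Hom C Y L \<and>
     cmp C phi lam = zr C X L \<and>
     (\<forall>M\<in>Ob C. \<forall>b\<in>Hom C Y M. cmp C phi b = zr C X M \<longrightarrow>
        (\<exists>!b'. b' \<in> Hom C L M \<and> b = cmp C lam b'))"

definition regular :: "('o, 'm) icat \<Rightarrow> 'o \<Rightarrow> 'o \<Rightarrow> 'm \<Rightarrow> bool" where
  "regular C X Y phi \<longleftrightarrow> (\<exists>chi\<in>Hom C Y X. cmp C (cmp C phi chi) phi = phi)"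

definition is_inverse :: "('o, 'm) icat \<Rightarrow> 'o \<Rightarrow> 'o \<Rightarrow> 'm \<Rightarrow> 'm \<Rightarrow> bool" where
  "is_inverse C X Y f g \<longleftrightarrow> g \<in> Hom C Y X \<and> cmp C f g = idm C X \<and> cmp C g f = idm C Y"

definition invertible :: "('o, 'm) icat \<Rightarrow> 'o \<Rightarrow> 'o \<Rightarrow> 'm \<Rightarrow> bool" where
  "invertible C X Y f \<longleftrightarrow> (\<exists>g. is_inverse C X Y f g)"

definition minv :: "('o, 'm) icat \<Rightarrow> 'o \<Rightarrow> 'o \<Rightarrow> 'm \<Rightarrow> 'm" where
  "minv C X Y f = (THE g. is_inverse C X Y f g)"

definition is_dcore_inv :: "('o, 'm) icat \<Rightarrow> 'o \<Rightarrow> 'm \<Rightarrow> 'm \<Rightarrow> bool" where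
  "is_dcore_inv C X phi chi \<longleftrightarrow> chi \<in> Hom C X X \<and>
     star C (cmp C chi phi) = cmp C chi phi \<and>
     cmp C (cmp C chi chi) phi = chi \<and>
     cmp C (cmp C phi phi) chi = phi"

definition has_dcore_inv :: "('o, 'm) icat \<Rightarrow> 'o \<Rightarrow> 'm \<Rightarrow> bool" where
  "has_dcore_inv C X phi \<longleftrightarrow> (\<exists>chi. is_dcore_inv C X phi chi)"

definition dcore :: "('o, 'm) icat \<Rightarrow> 'o \<Rightarrow> 'm \<Rightarrow> 'm" where
  "dcore C X phi = (THE chi. is_dcore_inv C X phi chi)"

definition mns :: "('o, 'm) icat \<Rightarrow> 'm \<Rightarrow> 'm \<Rightarrow> 'm" where
  "mns C f g = pls C f (ngt C g)"

end

theory Submission imports Defs begin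


locale aic = fixes C :: "('o,'m) icat" assumes A: "additive_inv_cat C"
begin

abbreviation cp (infixl "\<cdot>" 70) where "f \<cdot> g \<equiv> cmp C f g"
abbreviation H where "H \<equiv> Hom C"
abbreviation Obs where "Obs \<equiv> Ob C"

lemma pre: "is_preadditive C" using A unfolding additive_inv_cat_def is_additive_def by blast
lemma cat: "is_category C" using pre unfolding is_preadditive_def by blast
lemma inv: "is_involution C" using A unfolding additive_inv_cat_def by blast

lemma idc: "X\<in>Obs \<Longrightarrow> idm C X \<in> H X X" using cat unfolding is_category_def by blast
lemma cl: "\<lbrakk>X\<in>Obs; Y\<in>Obs; Z\<in>Obs; f\<in>H X Y; g\<in>H Y Z\<rbrakk> \<Longrightarrow> f\<cdot>g \<in> H X Z"
  using cat unfolding is_category_def by blast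
lemma as: "\<lbrakk>W\<in>Obs; X\<in>Obs; Y\<in>Obs; Z\<in>Obs; f\<in>H W X; g\<in>H X Y; h\<in>H Y Z\<rbrakk> \<Longrightarrow> (f\<cdot>g)\<cdot>h = f\<cdot>(g\<cdot>h)"
  using cat unfolding is_category_def by blast
lemma idl: "\<lbrakk>X\<in>Obs; Y\<in>Obs; f\<in>H X Y\<rbrakk> \<Longrightarrow> idm C X \<cdot> f = f"
  using cat unfolding is_category_def by blast
lemma idr: "\<lbrakk>X\<in>Obs; Y\<in>Obs; f\<in>H X Y\<rbrakk> \<Longrightarrow> f \<cdot> idm C Y = f"
  using cat unfolding is_category_def by blast

lemma zc: "\<lbrakk>X\<in>Obs; Y\<in>Obs\<rbrakk> \<Longrightarrow> zr C X Y \<in> H X Y" using pre unfolding is_preadditive_def by blast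
lemma pc: "\<lbrakk>X\<in>Obs; Y\<in>Obs; f\<in>H X Y; g\<in>H X Y\<rbrakk> \<Longrightarrow> pls C f g \<in> H X Y" using pre unfolding is_preadditive_def by blast
lemma nc: "\<lbrakk>X\<in>Obs; Y\<in>Obs; f\<in>H X Y\<rbrakk> \<Longrightarrow> ngt C f \<in> H X Y" using pre unfolding is_preadditive_def by blast
lemma pa: "\<lbrakk>X\<in>Obs; Y\<in>Obs; f\<in>H X Y; g\<in>H X Y; h\<in>H X Y\<rbrakk> \<Longrightarrow> pls C (pls C f g) h = pls C f (pls C g h)"
  using pre unfolding is_preadditive_def by blast
lemma pcm: "\<lbrakk>X\<in>Obs; Y\<in>Obs; f\<in>H X Y; g\<in>H X Y\<rbrakk> \<Longrightarrow> pls C f g = pls C g f"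
  using pre unfolding is_preadditive_def by blast
lemma p0: "\<lbrakk>X\<in>Obs; Y\<in>Obs; f\<in>H X Y\<rbrakk> \<Longrightarrow> pls C f (zr C X Y) = f"
  using pre unfolding is_preadditive_def by blast
lemma pn: "\<lbrakk>X\<in>Obs; Y\<in>Obs; f\<in>H X Y\<rbrakk> \<Longrightarrow> pls C f (ngt C f) = zr C X Y"
  using pre unfolding is_preadditive_def by blast
lemma dl: "\<lbrakk>X\<in>Obs; Y\<in>Obs; Z\<in>Obs; f\<in>H X Y; g\<in>H Y Z; h\<in>H Y Z\<rbrakk> \<Longrightarrow> f \<cdot> pls C g h = pls C (f\<cdot>g) (f\<cdot>h)"
  using pre unfolding is_preadditive_def by blast
lemma dr0: "\<forall>X\<in>Obs. \<forall>Y\<in>Obs. \<forall>Z\<in>Obs. \<forall>f\<in>H X Y. \<forall>g\<in>H X Y. \<forall>h\<in>H Y Z. pls C f g \<cdot> h = pls C (f\<cdot>h) (g\<cdot>h)"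
  using pre unfolding is_preadditive_def by meson
lemma dr: "\<lbrakk>X\<in>Obs; Y\<in>Obs; Z\<in>Obs; f\<in>H X Y; g\<in>H X Y; h\<in>H Y Z\<rbrakk> \<Longrightarrow> pls C f g \<cdot> h = pls C (f\<cdot>h) (g\<cdot>h)"
  using dr0 by blast

lemma sc: "\<lbrakk>X\<in>Obs; Y\<in>Obs; f\<in>H X Y\<rbrakk> \<Longrightarrow> star C f \<in> H Y X" using inv unfolding is_involution_def by blast
lemma ss: "\<lbrakk>X\<in>Obs; Y\<in>Obs; f\<in>H X Y\<rbrakk> \<Longrightarrow> star C (star C f) = f" using inv unfolding is_involution_def by blast
lemma scp: "\<lbrakk>X\<in>Obs; Y\<in>Obs; Z\<in>Obs; f\<in>H X Y; g\<in>H Y Z\<rbrakk> \<Longrightarrow> star C (f\<cdot>g) = star C g \<cdot> star C f"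
  using inv unfolding is_involution_def by blast
lemma sp: "\<lbrakk>X\<in>Obs; Y\<in>Obs; f\<in>H X Y; g\<in>H X Y\<rbrakk> \<Longrightarrow> star C (pls C f g) = pls C (star C f) (star C g)"
  using inv unfolding is_involution_def by blast

lemma mc: "\<lbrakk>X\<in>Obs; Y\<in>Obs; f\<in>H X Y; g\<in>H X Y\<rbrakk> \<Longrightarrow> mns C f g \<in> H X Y"
  unfolding mns_def by (simp add: nc pc)

lemma cancel: assumes "X\<in>Obs" "Y\<in>Obs" "a\<in>H X Y" "b\<in>H X Y" "c\<in>H X Y" "pls C a c = pls C b c" shows "a = b"
proof -
  have "a = pls C (pls C a c) (ngt C c)" using assms(1-5) by (simp add: pa[of X Y] nc[of X Y] pn[of X Y] p0[of X Y])
  also have "\<dots> = pls C (pls C b c) (ngt C c)" using assms by simp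
  also have "\<dots> = b" using assms(1-5) by (simp add: pa[of X Y] nc[of X Y] pn[of X Y] p0[of X Y])
  finally show ?thesis .
qed

lemma z0: "\<lbrakk>X\<in>Obs; Y\<in>Obs; f\<in>H X Y\<rbrakk> \<Longrightarrow> pls C (zr C X Y) f = f" by (simp add: pcm[of X Y "zr C X Y" f] zc p0)

lemma negu: assumes "X\<in>Obs" "Y\<in>Obs" "a\<in>H X Y" "b\<in>H X Y" "pls C a b = zr C X Y" shows "b = ngt C a"
proof -
  have "pls C b a = pls C (ngt C a) a" using assms by (simp add: pcm[of X Y b a] pcm[of X Y "ngt C a" a] nc pn)
  then show ?thesis using assms by (meson cancel nc)
qed

lemma mself: "\<lbrakk>X\<in>Obs; Y\<in>Obs; f\<in>H X Y\<rbrakk> \<Longrightarrow> mns C f f = zr C X Y" unfolding mns_def by (simp add: pn)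
lemma n0: "\<lbrakk>X\<in>Obs; Y\<in>Obs\<rbrakk> \<Longrightarrow> ngt C (zr C X Y) = zr C X Y" using negu[of X Y "zr C X Y" "zr C X Y"] by (simp add: p0 zc)
lemma m0: "\<lbrakk>X\<in>Obs; Y\<in>Obs; f\<in>H X Y\<rbrakk> \<Longrightarrow> mns C f (zr C X Y) = f" unfolding mns_def by (simp add: n0 p0)
lemma madd: "\<lbrakk>X\<in>Obs; Y\<in>Obs; f\<in>H X Y; g\<in>H X Y\<rbrakk> \<Longrightarrow> pls C (mns C f g) g = f"
  unfolding mns_def by (simp add: pa nc pcm[of X Y "ngt C g" g] pn p0)
lemma meq: "\<lbrakk>X\<in>Obs; Y\<in>Obs; f\<in>H X Y; g\<in>H X Y; mns C f g = zr C X Y\<rbrakk> \<Longrightarrow> f = g"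
  using madd[of X Y f g] z0[of X Y g] by simp
lemma msolve: assumes "X\<in>Obs" "Y\<in>Obs" "f\<in>H X Y" "g\<in>H X Y" "mns C f g = h" shows "g = mns C f h"
proof -
  have h: "h \<in> H X Y" using assms mc by blast
  have "f = pls C h g" using madd[OF assms(1-4)] assms(5) by simp
  hence "mns C f h = pls C (pls C g h) (ngt C h)" unfolding mns_def using pcm[of X Y h g] assms h by simp
  also have "\<dots> = g" using assms h by (simp add: pa[of X Y] nc[of X Y] pn[of X Y] p0[of X Y])
  finally show ?thesis by simp
qed

lemma cz: assumes "X\<in>Obs" "Y\<in>Obs" "Z\<in>Obs" "f\<in>H X Y" shows "f \<cdot> zr C Y Z = zr C X Z"
proof -
  have c: "f \<cdot> zr C Y Z \<in> H X Z" using assms by (simp add: cl zc)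
  have "pls C (f \<cdot> zr C Y Z) (f \<cdot> zr C Y Z) = pls C (zr C X Z) (f \<cdot> zr C Y Z)"
    using assms c dl[of X Y Z f "zr C Y Z" "zr C Y Z"] p0[of Y Z "zr C Y Z"] z0[of X Z "f \<cdot> zr C Y Z"] zc by simp
  thus ?thesis using assms c cancel zc by blast
qed
lemma zcp: assumes "X\<in>Obs" "Y\<in>Obs" "Z\<in>Obs" "f\<in>H Y Z" shows "zr C X Y \<cdot> f = zr C X Z"
proof -
  have c: "zr C X Y \<cdot> f \<in> H X Z" using assms by (meson cl zc)
  have "pls C (zr C X Y \<cdot> f) (zr C X Y \<cdot> f) = pls C (zr C X Z) (zr C X Y \<cdot> f)"
    using assms c dr[of X Y Z "zr C X Y" "zr C X Y" f] p0[of X Y "zr C X Y"] z0[of X Z "zr C X Y \<cdot> f"] zc by simp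
  thus ?thesis using assms c cancel zc by blast
qed
lemma cn: assumes "X\<in>Obs" "Y\<in>Obs" "Z\<in>Obs" "f\<in>H X Y" "g\<in>H Y Z" shows "f \<cdot> ngt C g = ngt C (f\<cdot>g)"
proof -
  have "pls C (f\<cdot>g) (f \<cdot> ngt C g) = zr C X Z" using assms dl[of X Y Z f g "ngt C g"] pn[of Y Z g] cz[of X Y Z f] nc by simp
  thus ?thesis using assms by (meson cl nc negu)
qed
lemma nc2: assumes "X\<in>Obs" "Y\<in>Obs" "Z\<in>Obs" "f\<in>H X Y" "g\<in>H Y Z" shows "ngt C f \<cdot> g = ngt C (f\<cdot>g)"
proof -
  have "pls C (f\<cdot>g) (ngt C f \<cdot> g) = zr C X Z" using assms dr[of X Y Z f "ngt C f" g] pn[of X Y f] zcp[of X Y Z g] nc by simp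
  thus ?thesis using assms by (meson cl nc negu)
qed
lemma dml: "\<lbrakk>X\<in>Obs; Y\<in>Obs; Z\<in>Obs; f\<in>H X Y; g\<in>H Y Z; h\<in>H Y Z\<rbrakk> \<Longrightarrow> f \<cdot> mns C g h = mns C (f\<cdot>g) (f\<cdot>h)"
  unfolding mns_def by (simp add: dl nc cn)
lemma dmr: "\<lbrakk>X\<in>Obs; Y\<in>Obs; Z\<in>Obs; f\<in>H X Y; g\<in>H X Y; h\<in>H Y Z\<rbrakk> \<Longrightarrow> mns C f g \<cdot> h = mns C (f\<cdot>h) (g\<cdot>h)"
  unfolding mns_def by (simp add: dr nc nc2)

lemma s0: assumes "X\<in>Obs" "Y\<in>Obs" shows "star C (zr C X Y) = zr C Y X"
proof -
  have c: "star C (zr C X Y) \<in> H Y X" using assms sc zc by blast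
  have "pls C (star C (zr C X Y)) (star C (zr C X Y)) = pls C (zr C Y X) (star C (zr C X Y))"
    using assms c sp[of X Y "zr C X Y" "zr C X Y"] p0[of X Y "zr C X Y"] z0[of Y X "star C (zr C X Y)"] zc by simp
  thus ?thesis using assms c cancel zc by blast
qed
lemma sn: assumes "X\<in>Obs" "Y\<in>Obs" "f\<in>H X Y" shows "star C (ngt C f) = ngt C (star C f)"
proof -
  have "pls C (star C f) (star C (ngt C f)) = zr C Y X" using assms sp[of X Y f "ngt C f"] pn[of X Y f] s0 nc by simp
  thus ?thesis using assms by (meson sc nc negu)
qed
lemma sm: "\<lbrakk>X\<in>Obs; Y\<in>Obs; f\<in>H X Y; g\<in>H X Y\<rbrakk> \<Longrightarrow> star C (mns C f g) = mns C (star C f) (star C g)"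
  unfolding mns_def by (simp add: sp nc sn)
lemma sid: assumes "X\<in>Obs" shows "star C (idm C X) = idm C X"
proof -
  have "star C (idm C X) = star C (idm C X) \<cdot> idm C X" using assms idr[of X X "star C (idm C X)"] idc sc by simp
  hence "star C (star C (idm C X)) = star C (idm C X) \<cdot> star C (star C (idm C X))"
    using assms scp[of X X X "star C (idm C X)" "idm C X"] idc sc by simp
  hence "idm C X = star C (idm C X) \<cdot> idm C X" using assms ss[of X X "idm C X"] idc by simp
  thus ?thesis using assms idr[of X X "star C (idm C X)"] idc sc by simp
qed

end



locale setting = aic +
  fixes X phi K kappa L lam
  assumes oX: "X\<in>Obs" and phi: "phi \<in> H X X"
    and ker: "is_kernel C X X phi K kappa" and cok: "is_cokernel C X X phi L lam"
begin

lemma oK: "K\<in>Obs" and kap: "kappa\<in>H K X" and kz: "kappa\<cdot>phi = zr C K X"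
  using ker unfolding is_kernel_def by auto
lemma oL: "L\<in>Obs" and lamH: "lam\<in>H X L" and lz: "phi\<cdot>lam = zr C X L"
  using cok unfolding is_cokernel_def by auto

lemmas ASX = as[of X X X X] as[of X X X K] as[of X X X L] as[of X X K X] as[of X X K K] as[of X X K L] as[of X X L X] as[of X X L K] as[of X X L L] as[of X K X X] as[of X K X K] as[of X K X L] as[of X K K X] as[of X K K K] as[of X K K L] as[of X K L X] as[of X K L K] as[of X K L L] as[of X L X X] as[of X L X K] as[of X L X L] as[of X L K X] as[of X L K K] as[of X L K L] as[of X L L X] as[of X L L K] as[of X L L L] as[of K X X X] as[of K X X K] as[of K X X L] as[of K X K X] as[of K X K K] as[of K X K L] as[of K X L X] as[of K X L K] as[of K X L L] as[of K K X X] as[of K K X K] as[of K K X L] as[of K K K X] as[of K K K K] as[of K K K L] as[of K K L X] as[of K K L K] as[of K K L L] as[of K L X X] as[of K L X K] as[of K L X L] as[of K L K X] as[of K L K K] as[of K L K L] as[of K L L X] as[of K L L K] as[of K L L L] as[of L X X X] as[of L X X K] as[of L X X L] as[of L X K X] as[of L X K K] as[of L X K L] as[of L X L X] as[of L X L K] as[of L X L L] as[of L K X X] as[of L K X K] as[of L K X L] as[of L K K X] as[of L K K K] as[of L K K L] as[of L K L X] as[of L K L K] as[of L K L L] as[of L L X X] as[of L L X K] as[of L L X L] as[of L L K X] as[of L L K K] as[of L L K L] as[of L L L X] as[of L L L K] as[of L L L L]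
lemmas CLX = cl[of X X X] cl[of X X K] cl[of X X L] cl[of X K X] cl[of X K K] cl[of X K L] cl[of X L X] cl[of X L K] cl[of X L L] cl[of K X X] cl[of K X K] cl[of K X L] cl[of K K X] cl[of K K K] cl[of K K L] cl[of K L X] cl[of K L K] cl[of K L L] cl[of L X X] cl[of L X K] cl[of L X L] cl[of L K X] cl[of L K K] cl[of L K L] cl[of L L X] cl[of L L K] cl[of L L L]
lemmas CZX = cz[of X X X] cz[of X X K] cz[of X X L] cz[of X K X] cz[of X K K] cz[of X K L] cz[of X L X] cz[of X L K] cz[of X L L] cz[of K X X] cz[of K X K] cz[of K X L] cz[of K K X] cz[of K K K] cz[of K K L] cz[of K L X] cz[of K L K] cz[of K L L] cz[of L X X] cz[of L X K] cz[of L X L] cz[of L K X] cz[of L K K] cz[of L K L] cz[of L L X] cz[of L L K] cz[of L L L]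
lemmas ZCPX = zcp[of X X X] zcp[of X X K] zcp[of X X L] zcp[of X K X] zcp[of X K K] zcp[of X K L] zcp[of X L X] zcp[of X L K] zcp[of X L L] zcp[of K X X] zcp[of K X K] zcp[of K X L] zcp[of K K X] zcp[of K K K] zcp[of K K L] zcp[of K L X] zcp[of K L K] zcp[of K L L] zcp[of L X X] zcp[of L X K] zcp[of L X L] zcp[of L K X] zcp[of L K K] zcp[of L K L] zcp[of L L X] zcp[of L L K] zcp[of L L L]
lemmas DMLX = dml[of X X X] dml[of X X K] dml[of X X L] dml[of X K X] dml[of X K K] dml[of X K L] dml[of X L X] dml[of X L K] dml[of X L L] dml[of K X X] dml[of K X K] dml[of K X L] dml[of K K X] dml[of K K K] dml[of K K L] dml[of K L X] dml[of K L K] dml[of K L L] dml[of L X X] dml[of L X K] dml[of L X L] dml[of L K X] dml[of L K K] dml[of L K L] dml[of L L X] dml[of L L K] dml[of L L L]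
lemmas DMRX = dmr[of X X X] dmr[of X X K] dmr[of X X L] dmr[of X K X] dmr[of X K K] dmr[of X K L] dmr[of X L X] dmr[of X L K] dmr[of X L L] dmr[of K X X] dmr[of K X K] dmr[of K X L] dmr[of K K X] dmr[of K K K] dmr[of K K L] dmr[of K L X] dmr[of K L K] dmr[of K L L] dmr[of L X X] dmr[of L X K] dmr[of L X L] dmr[of L K X] dmr[of L K K] dmr[of L K L] dmr[of L L X] dmr[of L L K] dmr[of L L L]
lemmas SCPX = scp[of X X X] scp[of X X K] scp[of X X L] scp[of X K X] scp[of X K K] scp[of X K L] scp[of X L X] scp[of X L K] scp[of X L L] scp[of K X X] scp[of K X K] scp[of K X L] scp[of K K X] scp[of K K K] scp[of K K L] scp[of K L X] scp[of K L K] scp[of K L L] scp[of L X X] scp[of L X K] scp[of L X L] scp[of L K X] scp[of L K K] scp[of L K L] scp[of L L X] scp[of L L K] scp[of L L L]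
lemmas MCX = mc[of X X] mc[of X K] mc[of X L] mc[of K X] mc[of K K] mc[of K L] mc[of L X] mc[of L K] mc[of L L]
lemmas M0X = m0[of X X] m0[of X K] m0[of X L] m0[of K X] m0[of K K] m0[of K L] m0[of L X] m0[of L K] m0[of L L]
lemmas MSELFX = mself[of X X] mself[of X K] mself[of X L] mself[of K X] mself[of K K] mself[of K L] mself[of L X] mself[of L K] mself[of L L]
lemmas SCX = sc[of X X] sc[of X K] sc[of X L] sc[of K X] sc[of K K] sc[of K L] sc[of L X] sc[of L K] sc[of L L]
lemmas SMX = sm[of X X] sm[of X K] sm[of X L] sm[of K X] sm[of K K] sm[of K L] sm[of L X] sm[of L K] sm[of L L]
lemmas SSX = ss[of X X] ss[of X K] ss[of X L] ss[of K X] ss[of K K] ss[of K L] ss[of L X] ss[of L K] ss[of L L]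
lemmas IDLX = idl[of X X] idl[of X K] idl[of X L] idl[of K X] idl[of K K] idl[of K L] idl[of L X] idl[of L K] idl[of L L]
lemmas IDRX = idr[of X X] idr[of X K] idr[of X L] idr[of K X] idr[of K K] idr[of K L] idr[of L X] idr[of L K] idr[of L L]
lemmas ZCX = zc[of X X] zc[of X K] zc[of X L] zc[of K X] zc[of K K] zc[of K L] zc[of L X] zc[of L K] zc[of L L]
lemmas S0X = s0[of X X] s0[of X K] s0[of X L] s0[of K X] s0[of K K] s0[of K L] s0[of L X] s0[of L K] s0[of L L]
lemmas MEQX = meq[of X X] meq[of X K] meq[of X L] meq[of K X] meq[of K K] meq[of K L] meq[of L X] meq[of L K] meq[of L L]
lemmas IDX = idc[of X] idc[of K] idc[of L] sid[of X] sid[of K] sid[of L]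
lemmas S = ASX CLX CZX ZCPX DMLX DMRX SCPX MCX M0X MSELFX SCX SMX SSX IDLX IDRX ZCX S0X IDX oX oK oL phi kap lamH

lemma kfac: "\<lbrakk>M\<in>Obs; a\<in>H M X; a\<cdot>phi = zr C M X\<rbrakk> \<Longrightarrow> \<exists>a'\<in>H M K. a = a'\<cdot>kappa"
  using ker unfolding is_kernel_def by blast
lemma kmono: assumes "M\<in>Obs" "a\<in>H M K" "b\<in>H M K" "a\<cdot>kappa = b\<cdot>kappa" shows "a = b"
proof -
  have h: "a\<cdot>kappa \<in> H M X" using assms cl oK oX kap by blast
  have "(a\<cdot>kappa)\<cdot>phi = zr C M X" using assms oK oX kap phi as[of M K X X] kz cz[of M K X] by simp
  then have "\<exists>!a'. a' \<in> H M K \<and> a\<cdot>kappa = a'\<cdot>kappa" using ker h assms(1) unfolding is_kernel_def by blast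
  thus ?thesis using assms by blast
qed
lemma cfac: "\<lbrakk>M\<in>Obs; b\<in>H X M; phi\<cdot>b = zr C X M\<rbrakk> \<Longrightarrow> \<exists>b'\<in>H L M. b = lam\<cdot>b'"
  using cok unfolding is_cokernel_def by blast
lemma cepi: assumes "M\<in>Obs" "a\<in>H L M" "b\<in>H L M" "lam\<cdot>a = lam\<cdot>b" shows "a = b"
proof -
  have h: "lam\<cdot>a \<in> H X M" using assms cl oL oX lamH by blast
  have "phi\<cdot>(lam\<cdot>a) = zr C X M" using assms oL oX lamH phi as[of X X L M] lz zcp[of X L M] by (simp flip: as[of X X L M])
  then have "\<exists>!b'. b' \<in> H L M \<and> lam\<cdot>a = lam\<cdot>b'" using cok h assms(1) unfolding is_cokernel_def by blast
  thus ?thesis using assms by blast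
qed

lemma lz': "f \<in> H L Y \<Longrightarrow> Y \<in> Obs \<Longrightarrow> phi\<cdot>(lam\<cdot>f) = zr C X Y"
  using as[of X X L Y phi lam f] lz zcp[of X L Y f] oX oL phi lamH by simp
lemma kz': "f \<in> H Y K \<Longrightarrow> Y \<in> Obs \<Longrightarrow> f\<cdot>(kappa\<cdot>phi) = zr C Y X"
  using kz cz[of Y K X f] oX oK by simp

end


context setting begin

lemma fwd_basic:
  assumes ch: "chi \<in> H X X" and e2: "chi\<cdot>(chi\<cdot>phi) = chi" and e3: "phi\<cdot>(phi\<cdot>chi) = phi"
  shows "phi\<cdot>(chi\<cdot>phi) = phi" and "chi\<cdot>(phi\<cdot>chi) = chi"
    and "phi\<cdot>chi = phi\<cdot>(phi\<cdot>(chi\<cdot>(chi\<cdot>(chi\<cdot>phi))))"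
proof -
  have "phi\<cdot>(chi\<cdot>phi) = (phi\<cdot>(phi\<cdot>chi))\<cdot>(chi\<cdot>phi)" using e3 by simp
  also have "\<dots> = phi\<cdot>(phi\<cdot>(chi\<cdot>(chi\<cdot>phi)))" using ch by (simp only: S)
  also have "\<dots> = phi" using e2 e3 by simp
  finally show "phi\<cdot>(chi\<cdot>phi) = phi" .
  have "chi\<cdot>(phi\<cdot>chi) = (chi\<cdot>(chi\<cdot>phi))\<cdot>(phi\<cdot>chi)" using e2 by simp
  also have "\<dots> = chi\<cdot>(chi\<cdot>(phi\<cdot>(phi\<cdot>chi)))" using ch by (simp only: S)
  also have "\<dots> = chi" using e2 e3 by simp
  finally show "chi\<cdot>(phi\<cdot>chi) = chi" .
  have "phi\<cdot>chi = (phi\<cdot>(phi\<cdot>chi))\<cdot>chi" using e3 by simp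
  also have "\<dots> = phi\<cdot>(phi\<cdot>(chi\<cdot>chi))" using ch by (simp only: S)
  also have "\<dots> = phi\<cdot>(phi\<cdot>(chi\<cdot>(chi\<cdot>(chi\<cdot>phi))))" using e2 by simp
  finally show "phi\<cdot>chi = phi\<cdot>(phi\<cdot>(chi\<cdot>(chi\<cdot>(chi\<cdot>phi))))" .
qed

end


context setting begin

lemma kzt: "f \<in> H X Y \<Longrightarrow> Y \<in> Obs \<Longrightarrow> kappa\<cdot>(phi\<cdot>f) = zr C K Y"
  using as[of K X X Y kappa phi f] kz zcp[of K X Y f] oX oK phi kap by simp

lemma fwd:
  assumes d: "is_dcore_inv C X phi chi"
  shows "regular C X X phi \<and> invertible C K L (kappa\<cdot>lam) \<and> invertible C L L (star C lam\<cdot>lam)"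
proof -
  have ch: "chi \<in> H X X" and e1: "star C (chi\<cdot>phi) = chi\<cdot>phi" and e2': "(chi\<cdot>chi)\<cdot>phi = chi"
    and e3': "(phi\<cdot>phi)\<cdot>chi = phi" using d unfolding is_dcore_inv_def by auto
  have e2: "chi\<cdot>(chi\<cdot>phi) = chi" using e2' ch by (simp add: S)
  have e3: "phi\<cdot>(phi\<cdot>chi) = phi" using e3' ch by (simp add: S)
  note b = fwd_basic[OF ch e2 e3]
  have a: "phi\<cdot>(chi\<cdot>phi) = phi" by (rule b(1))
  have reg: "regular C X X phi" unfolding regular_def using ch a phi oX by (auto simp: S)
  have pl: "phi\<cdot>(chi\<cdot>lam) = zr C X L"
  proof -
    have "phi\<cdot>(chi\<cdot>lam) = (phi\<cdot>chi)\<cdot>lam" using ch by (simp add: S)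
    also have "\<dots> = (phi\<cdot>(phi\<cdot>(chi\<cdot>(chi\<cdot>(chi\<cdot>phi)))))\<cdot>lam" using b(3) by simp
    also have "\<dots> = zr C X L" using ch by (simp add: S lz)
    finally show ?thesis .
  qed
  define P where "P = mns C (idm C X) (phi\<cdot>chi)"
  have PH: "P \<in> H X X" unfolding P_def using ch by (simp add: S)
  have "P\<cdot>phi = zr C X X" unfolding P_def using ch a by (simp add: S)
  then obtain sigma where sH: "sigma \<in> H X K" and sk: "P = sigma\<cdot>kappa" using kfac[of X P] PH oX by blast
  have "phi\<cdot>P = zr C X X" unfolding P_def using ch e3 by (simp add: S)
  then obtain tau where tH: "tau \<in> H L X" and lt: "P = lam\<cdot>tau" using cfac[of X P] PH oX by blast
  have kP: "kappa\<cdot>P = kappa" unfolding P_def using ch by (simp add: S kzt)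
  have ks: "kappa\<cdot>sigma = idm C K"
  proof (rule kmono[OF oK])
    have "(kappa\<cdot>sigma)\<cdot>kappa = kappa\<cdot>(sigma\<cdot>kappa)" using sH by (simp add: S)
    also have "\<dots> = kappa" using sk kP by simp
    also have "\<dots> = idm C K \<cdot> kappa" by (simp add: S)
    finally show "(kappa\<cdot>sigma)\<cdot>kappa = idm C K \<cdot> kappa" .
  qed (use sH in \<open>simp_all add: S\<close>)
  have Pl: "P\<cdot>lam = lam" unfolding P_def using ch pl by (simp add: S)
  have inv1: "is_inverse C K L (kappa\<cdot>lam) (tau\<cdot>sigma)"
    unfolding is_inverse_def
  proof (intro conjI)
    show "tau\<cdot>sigma \<in> H L K" using sH tH by (simp add: S)
    have "(kappa\<cdot>lam)\<cdot>(tau\<cdot>sigma) = kappa\<cdot>((lam\<cdot>tau)\<cdot>sigma)" using sH tH by (simp add: S)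
    also have "\<dots> = kappa\<cdot>(P\<cdot>sigma)" using lt by simp
    also have "\<dots> = (kappa\<cdot>P)\<cdot>sigma" using sH PH by (simp add: S)
    also have "\<dots> = idm C K" using kP ks by simp
    finally show "(kappa\<cdot>lam)\<cdot>(tau\<cdot>sigma) = idm C K" .
    show "(tau\<cdot>sigma)\<cdot>(kappa\<cdot>lam) = idm C L"
    proof (rule cepi[OF oL])
      have "lam\<cdot>((tau\<cdot>sigma)\<cdot>(kappa\<cdot>lam)) = (lam\<cdot>tau)\<cdot>((sigma\<cdot>kappa)\<cdot>lam)" using sH tH by (simp add: S)
      also have "\<dots> = P\<cdot>(P\<cdot>lam)" using lt sk by simp
      also have "\<dots> = lam \<cdot> idm C L" using Pl by (simp add: S)
      finally show "lam\<cdot>((tau\<cdot>sigma)\<cdot>(kappa\<cdot>lam)) = lam \<cdot> idm C L" .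
    qed (use sH tH in \<open>simp_all add: S\<close>)
  qed
  define Q where "Q = mns C (idm C X) (chi\<cdot>phi)"
  have QH: "Q \<in> H X X" unfolding Q_def using ch by (simp add: S)
  have "phi\<cdot>Q = zr C X X" unfolding Q_def using ch a by (simp add: S)
  then obtain rho where rH: "rho \<in> H L X" and lr: "Q = lam\<cdot>rho" using cfac[of X Q] QH oX by blast
  have rl: "rho\<cdot>lam = idm C L"
  proof (rule cepi[OF oL])
    have "lam\<cdot>(rho\<cdot>lam) = (lam\<cdot>rho)\<cdot>lam" using rH by (simp add: S)
    also have "\<dots> = Q\<cdot>lam" using lr by simp
    also have "\<dots> = lam \<cdot> idm C L" unfolding Q_def using ch by (simp add: S lz)
    finally show "lam\<cdot>(rho\<cdot>lam) = lam \<cdot> idm C L" .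
  qed (use rH in \<open>simp_all add: S\<close>)
  have sQ: "star C Q = Q" unfolding Q_def using ch e1 by (simp add: SMX MCX CLX IDX SSX SCX oX phi)
  have srl: "star C rho \<cdot> star C lam = lam\<cdot>rho"
  proof -
    have "star C rho \<cdot> star C lam = star C (lam\<cdot>rho)" using rH by (simp add: S)
    also have "\<dots> = lam\<cdot>rho" using sQ lr by simp
    finally show ?thesis .
  qed
  have slr: "star C lam \<cdot> star C rho = idm C L"
  proof -
    have "star C lam \<cdot> star C rho = star C (rho\<cdot>lam)" using rH by (simp add: S)
    also have "\<dots> = idm C L" using rl by (simp add: S)
    finally show ?thesis .
  qed
  have inv2: "is_inverse C L L (star C lam\<cdot>lam) (rho\<cdot>star C rho)"
    unfolding is_inverse_def
  proof (intro conjI)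
    show "rho\<cdot>star C rho \<in> H L L" using rH by (simp add: S)
    have "(star C lam\<cdot>lam)\<cdot>(rho\<cdot>star C rho) = star C lam\<cdot>((lam\<cdot>rho)\<cdot>star C rho)" using rH by (simp add: S)
    also have "\<dots> = star C lam\<cdot>((star C rho \<cdot> star C lam)\<cdot>star C rho)" using srl by simp
    also have "\<dots> = (star C lam \<cdot> star C rho) \<cdot> (star C lam\<cdot>star C rho)" using rH by (simp add: S)
    also have "\<dots> = idm C L" using slr by (simp add: S)
    finally show "(star C lam\<cdot>lam)\<cdot>(rho\<cdot>star C rho) = idm C L" .
    have "(rho\<cdot>star C rho)\<cdot>(star C lam\<cdot>lam) = rho\<cdot>((star C rho \<cdot> star C lam)\<cdot>lam)" using rH by (simp add: S)
    also have "\<dots> = rho\<cdot>((lam\<cdot>rho)\<cdot>lam)" using srl by simp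
    also have "\<dots> = (rho\<cdot>lam)\<cdot>(rho\<cdot>lam)" using rH by (simp add: S)
    also have "\<dots> = idm C L" using rl by (simp add: S)
    finally show "(rho\<cdot>star C rho)\<cdot>(star C lam\<cdot>lam) = idm C L" .
  qed
  show ?thesis using reg inv1 inv2 unfolding invertible_def by blast
qed

end


context setting begin

lemma inv_unique: assumes "A\<in>Obs" "B\<in>Obs" "f\<in>H A B" "is_inverse C A B f g" "is_inverse C A B f h" shows "g = h"
proof -
  have g: "g\<in>H B A" "f\<cdot>g = idm C A" "g\<cdot>f = idm C B" and h: "h\<in>H B A" "f\<cdot>h = idm C A" "h\<cdot>f = idm C B"
    using assms unfolding is_inverse_def by auto
  have "g = g\<cdot>(f\<cdot>h)" using g h assms idr by simp
  also have "\<dots> = (g\<cdot>f)\<cdot>h" using g h assms as[of B A B A g f h] by metis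
  also have "\<dots> = h" using g h assms idl by simp
  finally show ?thesis .
qed

lemma minv_eq: "\<lbrakk>A\<in>Obs; B\<in>Obs; f\<in>H A B; is_inverse C A B f g\<rbrakk> \<Longrightarrow> minv C A B f = g"
  unfolding minv_def using inv_unique by blast

lemma bwd:
  assumes psH: "psi \<in> H X X" and ps: "(phi\<cdot>psi)\<cdot>phi = phi"
    and iu: "is_inverse C K L (kappa\<cdot>lam) u" and iv: "is_inverse C L L (star C lam\<cdot>lam) v"
  shows "is_dcore_inv C X phi (cmp C (cmp C
                   (mns C (idm C X) (cmp C (cmp C lam v) (star C lam))) psi)
                   (mns C (idm C X) (cmp C (cmp C lam u) kappa)))"
proof -
  have uH: "u \<in> H L K" and u1: "(kappa\<cdot>lam)\<cdot>u = idm C K" and u2: "u\<cdot>(kappa\<cdot>lam) = idm C L"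
    using iu unfolding is_inverse_def by auto
  have vH: "v \<in> H L L" and v1: "(star C lam\<cdot>lam)\<cdot>v = idm C L" and v2: "v\<cdot>(star C lam\<cdot>lam) = idm C L"
    using iv unfolding is_inverse_def by auto
  have sv: "star C v = v"
  proof -
    have "is_inverse C L L (star C lam\<cdot>lam) (star C v)"
      unfolding is_inverse_def
    proof (intro conjI)
      show "star C v \<in> H L L" using vH by (simp add: S)
      have "(star C lam\<cdot>lam)\<cdot>star C v = star C (v\<cdot>(star C lam\<cdot>lam))" using vH by (simp add: S)
      thus "(star C lam\<cdot>lam)\<cdot>star C v = idm C L" using v2 by (simp add: S)
      have "star C v\<cdot>(star C lam\<cdot>lam) = star C ((star C lam\<cdot>lam)\<cdot>v)" using vH by (simp add: S)
      thus "star C v\<cdot>(star C lam\<cdot>lam) = idm C L" using v1 by (simp add: S)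
    qed
    moreover have "star C lam\<cdot>lam \<in> H L L" by (simp add: S)
    ultimately show ?thesis using inv_unique[OF oL oL _ _ iv] by blast
  qed
  define P where "P = mns C (idm C X) ((lam\<cdot>v)\<cdot>star C lam)"
  define Q where "Q = mns C (idm C X) ((lam\<cdot>u)\<cdot>kappa)"
  define chi where "chi = (P\<cdot>psi)\<cdot>Q"
  have PH: "P \<in> H X X" unfolding P_def using vH by (simp add: S)
  have QH: "Q \<in> H X X" unfolding Q_def using uH by (simp add: S)
  have chH: "chi \<in> H X X" unfolding chi_def using PH QH psH by (simp add: S)
  have sP: "star C P = P" unfolding P_def using vH sv by (simp add: S)
  have u1': "kappa\<cdot>(lam\<cdot>(u\<cdot>kappa)) = kappa"
  proof -
    have "kappa\<cdot>(lam\<cdot>(u\<cdot>kappa)) = ((kappa\<cdot>lam)\<cdot>u)\<cdot>kappa" using uH by (simp add: S)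
    thus ?thesis using u1 by (simp add: S)
  qed
  have Pl: "P\<cdot>lam = zr C X L" unfolding P_def using vH by (simp add: S v2)
  have kQ: "kappa\<cdot>Q = zr C K X" unfolding Q_def using uH by (simp add: S u1')
  have Ql: "Q\<cdot>lam = zr C X L" unfolding Q_def using uH by (simp add: S u2)
  have QP: "Q\<cdot>P = Q"
  proof -
    have "Q\<cdot>P = mns C Q ((Q\<cdot>lam)\<cdot>(v\<cdot>star C lam))" unfolding P_def using QH vH by (simp add: S)
    thus ?thesis using Ql QH vH by (simp add: S)
  qed
  have phP: "phi\<cdot>P = phi" unfolding P_def using vH by (simp add: S lz'[of "v\<cdot>star C lam" X])
  have phQ: "phi\<cdot>Q = phi" unfolding Q_def using uH by (simp add: S lz'[of "u\<cdot>kappa" X])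
  have Qph: "Q\<cdot>phi = phi" unfolding Q_def using uH by (simp add: S kz)
  have "phi\<cdot>mns C (idm C X) (psi\<cdot>phi) = zr C X X" using psH ps by (simp add: S)
  moreover have "mns C (idm C X) (psi\<cdot>phi) \<in> H X X" using psH by (simp add: S)
  ultimately obtain r where rH: "r \<in> H L X" and r: "mns C (idm C X) (psi\<cdot>phi) = lam\<cdot>r"
    using cfac[of X] oX by blast
  have psphi: "psi\<cdot>phi = mns C (idm C X) (lam\<cdot>r)"
    using msolve[OF oX oX _ _ r] psH by (simp add: S)
  have "mns C (idm C X) (phi\<cdot>psi)\<cdot>phi = zr C X X" using psH ps by (simp add: S)
  moreover have "mns C (idm C X) (phi\<cdot>psi) \<in> H X X" using psH by (simp add: S)
  ultimately obtain s where sH: "s \<in> H X K" and s: "mns C (idm C X) (phi\<cdot>psi) = s\<cdot>kappa"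
    using kfac[of X] oX by blast
  have phps: "phi\<cdot>psi = mns C (idm C X) (s\<cdot>kappa)"
    using msolve[OF oX oX _ _ s] psH by (simp add: S)
  have cp: "chi\<cdot>phi = P"
  proof -
    have "chi\<cdot>phi = P\<cdot>(psi\<cdot>(Q\<cdot>phi))" unfolding chi_def using PH QH psH by (simp add: S)
    also have "\<dots> = P\<cdot>(mns C (idm C X) (lam\<cdot>r))" using Qph psphi by simp
    also have "\<dots> = mns C P ((P\<cdot>lam)\<cdot>r)" using PH rH by (simp add: S)
    also have "\<dots> = P" using Pl PH rH by (simp add: S)
    finally show ?thesis .
  qed
  have c1: "star C (chi\<cdot>phi) = chi\<cdot>phi" using cp sP by simp
  have c2: "(chi\<cdot>chi)\<cdot>phi = chi"
  proof -
    have "(chi\<cdot>chi)\<cdot>phi = chi\<cdot>(chi\<cdot>phi)" using chH by (simp add: S)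
    also have "\<dots> = chi\<cdot>P" using cp by simp
    also have "\<dots> = (P\<cdot>psi)\<cdot>(Q\<cdot>P)" unfolding chi_def using PH QH psH by (simp add: S)
    also have "\<dots> = chi" unfolding chi_def using QP by simp
    finally show ?thesis .
  qed
  have c3: "(phi\<cdot>phi)\<cdot>chi = phi"
  proof -
    have "(phi\<cdot>phi)\<cdot>chi = phi\<cdot>(((phi\<cdot>P)\<cdot>psi)\<cdot>Q)" unfolding chi_def using PH QH psH by (simp add: S)
    also have "\<dots> = phi\<cdot>((phi\<cdot>psi)\<cdot>Q)" using phP by simp
    also have "\<dots> = phi\<cdot>(mns C Q (s\<cdot>(kappa\<cdot>Q)))" using phps QH sH by (simp add: S)
    also have "\<dots> = phi" using kQ phQ QH sH by (simp add: S)
    finally show ?thesis .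
  qed
  show ?thesis unfolding is_dcore_inv_def using chH c1 c2 c3
    unfolding chi_def P_def Q_def by blast
qed

end


context setting begin

lemma dc_facts:
  assumes d: "is_dcore_inv C X phi chi"
  shows "chi \<in> H X X" "star C (chi\<cdot>phi) = chi\<cdot>phi" "chi\<cdot>(chi\<cdot>phi) = chi" "phi\<cdot>(phi\<cdot>chi) = phi"
    "phi\<cdot>(chi\<cdot>phi) = phi" "chi\<cdot>(phi\<cdot>chi) = chi" "phi\<cdot>chi = phi\<cdot>(phi\<cdot>(chi\<cdot>(chi\<cdot>(chi\<cdot>phi))))"
proof -
  have ch: "chi \<in> H X X" and e1: "star C (chi\<cdot>phi) = chi\<cdot>phi" and e2': "(chi\<cdot>chi)\<cdot>phi = chi"
    and e3': "(phi\<cdot>phi)\<cdot>chi = phi" using d unfolding is_dcore_inv_def by auto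
  have e2: "chi\<cdot>(chi\<cdot>phi) = chi" using e2' ch by (simp add: S)
  have e3: "phi\<cdot>(phi\<cdot>chi) = phi" using e3' ch by (simp add: S)
  note b = fwd_basic[OF ch e2 e3]
  show "chi \<in> H X X" "star C (chi\<cdot>phi) = chi\<cdot>phi" "chi\<cdot>(chi\<cdot>phi) = chi" "phi\<cdot>(phi\<cdot>chi) = phi"
    "phi\<cdot>(chi\<cdot>phi) = phi" "chi\<cdot>(phi\<cdot>chi) = chi" "phi\<cdot>chi = phi\<cdot>(phi\<cdot>(chi\<cdot>(chi\<cdot>(chi\<cdot>phi))))"
    using ch e1 e2 e3 b by auto
qed

lemma uniq:
  assumes d1: "is_dcore_inv C X phi x" and d2: "is_dcore_inv C X phi y"
  shows "x = y"
proof -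
  note f1 = dc_facts[OF d1] and f2 = dc_facts[OF d2]
  have xH: "x \<in> H X X" and yH: "y \<in> H X X" using f1(1) f2(1) .
  have p: "phi\<cdot>x = phi\<cdot>y"
  proof -
    have "phi\<cdot>y = (phi\<cdot>(x\<cdot>phi))\<cdot>y" using f1(5) by simp
    also have "\<dots> = (phi\<cdot>x)\<cdot>(phi\<cdot>y)" using xH yH by (simp add: S)
    also have "\<dots> = (phi\<cdot>(phi\<cdot>(x\<cdot>(x\<cdot>(x\<cdot>phi)))))\<cdot>(phi\<cdot>y)" using f1(7) by simp
    also have "\<dots> = phi\<cdot>(phi\<cdot>(x\<cdot>(x\<cdot>(x\<cdot>(phi\<cdot>(phi\<cdot>y))))))" using xH yH by (simp add: S)
    also have "\<dots> = phi\<cdot>(phi\<cdot>(x\<cdot>(x\<cdot>(x\<cdot>phi))))" using f2(4) by simp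
    also have "\<dots> = phi\<cdot>x" using f1(7) by simp
    finally show ?thesis by simp
  qed
  have xy: "(x\<cdot>phi)\<cdot>(y\<cdot>phi) = x\<cdot>phi"
  proof -
    have "(x\<cdot>phi)\<cdot>(y\<cdot>phi) = x\<cdot>(phi\<cdot>(y\<cdot>phi))" using xH yH by (simp add: S)
    thus ?thesis using f2(5) by simp
  qed
  have yx: "(y\<cdot>phi)\<cdot>(x\<cdot>phi) = y\<cdot>phi"
  proof -
    have "(y\<cdot>phi)\<cdot>(x\<cdot>phi) = y\<cdot>(phi\<cdot>(x\<cdot>phi))" using xH yH by (simp add: S)
    thus ?thesis using f1(5) by simp
  qed
  have e: "x\<cdot>phi = y\<cdot>phi"
  proof -
    have "x\<cdot>phi = star C ((x\<cdot>phi)\<cdot>(y\<cdot>phi))" using xy f1(2) by simp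
    also have "\<dots> = star C (y\<cdot>phi)\<cdot>star C (x\<cdot>phi)" by (rule scp[of X X X]) (use xH yH in \<open>simp_all add: S\<close>)
    also have "\<dots> = y\<cdot>phi" using f1(2) f2(2) yx by simp
    finally show ?thesis .
  qed
  have "x = x\<cdot>(phi\<cdot>x)" using f1(6) by simp
  also have "\<dots> = (x\<cdot>phi)\<cdot>x" using xH by (simp add: S)
  also have "\<dots> = (y\<cdot>phi)\<cdot>x" using e by simp
  also have "\<dots> = y\<cdot>(phi\<cdot>y)" using xH yH p by (simp add: S)
  also have "\<dots> = y" using f2(6) by simp
  finally show ?thesis .
qed

lemma dcore_eq: "is_dcore_inv C X phi x \<Longrightarrow> dcore C X phi = x"
  unfolding dcore_def using uniq by blast

lemma main:
  shows "(has_dcore_inv C X phi \<longleftrightarrow>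
            regular C X X phi \<and>
            invertible C K L (cmp C kappa lam) \<and>
            invertible C L L (cmp C (star C lam) lam)) \<and>
         (has_dcore_inv C X phi \<longrightarrow>
            (\<forall>psi\<in>Hom C X X. cmp C (cmp C phi psi) phi = phi \<longrightarrow>
               dcore C X phi =
                 cmp C (cmp C
                   (mns C (idm C X)
                      (cmp C (cmp C lam (minv C L L (cmp C (star C lam) lam))) (star C lam)))
                   psi)
                   (mns C (idm C X)
                      (cmp C (cmp C lam (minv C K L (cmp C kappa lam))) kappa))))"
proof -
  have R: "regular C X X phi \<and> invertible C K L (kappa\<cdot>lam) \<and> invertible C L L (star C lam\<cdot>lam)
     \<Longrightarrow> psi \<in> H X X \<Longrightarrow> (phi\<cdot>psi)\<cdot>phi = phi \<Longrightarrow>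
     is_dcore_inv C X phi (cmp C (cmp C
                   (mns C (idm C X)
                      (cmp C (cmp C lam (minv C L L (cmp C (star C lam) lam))) (star C lam)))
                   psi)
                   (mns C (idm C X)
                      (cmp C (cmp C lam (minv C K L (cmp C kappa lam))) kappa)))" for psi
  proof -
    assume h: "regular C X X phi \<and> invertible C K L (kappa\<cdot>lam) \<and> invertible C L L (star C lam\<cdot>lam)"
      and psH: "psi \<in> H X X" and ps: "(phi\<cdot>psi)\<cdot>phi = phi"
    obtain u where iu: "is_inverse C K L (kappa\<cdot>lam) u" using h unfolding invertible_def by blast
    obtain v where iv: "is_inverse C L L (star C lam\<cdot>lam) v" using h unfolding invertible_def by blast
    have mu: "minv C K L (kappa\<cdot>lam) = u" by (rule minv_eq[OF oK oL _ iu]) (simp add: S)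
    have mv: "minv C L L (star C lam\<cdot>lam) = v" by (rule minv_eq[OF oL oL _ iv]) (simp add: S)
    show ?thesis unfolding mu mv by (rule bwd[OF psH ps iu iv])
  qed
  have F: "has_dcore_inv C X phi \<Longrightarrow> regular C X X phi \<and> invertible C K L (kappa\<cdot>lam) \<and> invertible C L L (star C lam\<cdot>lam)"
    unfolding has_dcore_inv_def using fwd by blast
  have B: "regular C X X phi \<and> invertible C K L (kappa\<cdot>lam) \<and> invertible C L L (star C lam\<cdot>lam) \<Longrightarrow> has_dcore_inv C X phi"
  proof -
    assume h: "regular C X X phi \<and> invertible C K L (kappa\<cdot>lam) \<and> invertible C L L (star C lam\<cdot>lam)"
    then obtain psi where "psi \<in> H X X" "(phi\<cdot>psi)\<cdot>phi = phi" unfolding regular_def by blast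
    thus ?thesis using R[OF h] unfolding has_dcore_inv_def by blast
  qed
  show ?thesis using F B R dcore_eq by blast
qed

end

theorem theorem3p4:
  fixes C :: "('o, 'm) icat"
  assumes "additive_inv_cat C"
    and "X \<in> Ob C" and "phi \<in> Hom C X X"
    and "is_kernel C X X phi K kappa"
    and "is_cokernel C X X phi L lam"
  shows "(has_dcore_inv C X phi \<longleftrightarrow>
            regular C X X phi \<and>
            invertible C K L (cmp C kappa lam) \<and>
            invertible C L L (cmp C (star C lam) lam)) \<and>
         (has_dcore_inv C X phi \<longrightarrow>
            (\<forall>psi\<in>Hom C X X. cmp C (cmp C phi psi) phi = phi \<longrightarrow>
               dcore C X phi =
                 cmp C (cmp C
                   (mns C (idm C X)
                      (cmp C (cmp C lam (minv C L L (cmp C (star C lam) lam))) (star C lam)))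
                   psi)
                   (mns C (idm C X)
                      (cmp C (cmp C lam (minv C K L (cmp C kappa lam))) kappa))))"
proof -
  interpret setting C X phi K kappa L lam
    by unfold_locales (use assms in auto)
  show ?thesis by (rule main)
qed


end
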